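(* Let $k\geq2$. Then $$F_k(x,p)=\sum_{j=0}^{k-2}J_j(p)x^j+\frac{x^{k-1}}{1-(k-1)x^2}\bigl((k-1)J_{k-2}(p)x+J_{k-1}(p)\bigr).$$ Moreover, for all $n\geq0$, the number of involutions of length $k+2n$ that avoid all patterns in $\mathcal{F}_k$ is $(k-1)^{n+1}I_{k-2}$, and the number of involutions of length $k+2n-1$ that avoid all patterns in $\mathcal{F}_k$ is $(k-1)^nI_{k-1}$.
   Context: $\mathcal{F}_k=\{\sigma\in\mathfrak{S}_k:\sigma_1=1\}$. An involution is a permutation $\pi$ with $\pi_{\pi_i}=i$ for all $i$; $\mathcal{I}_n(T)$ is the set of involutions of $[n]$ avoiding (in the classical pattern sense) every pattern in $T$; $\mathcal{I}_0$ contains only the empty permutation. $I_n$ is the number of involutions of $[n]$. $J_n(p)=\sum_{\pi\in\mathcal{I}_n}p^{\mathrm{fix}(\pi)}$, where $\mathrm{fix}(\pi)$ is the number of fixed points; $J_0=1,J_1=p$, $J_n=pJ_{n-1}+(n-1)J_{n-2}$. $F_k(x,p)=\sum_{n\ge0}\sum_{\pi\in\mathcal{I}_n(\mathcal{F}_k)}p^{\mathrm{fix}(\pi)}x^n$. *)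

theory Defs
  imports "HOL-Combinatorics.Permutations" "HOL-Computational_Algebra.Formal_Power_Series"
begin

text \<open>Permutations of [n] are functions that permute {1..n} (identity outside).\<close>

definition is_involution :: "nat \<Rightarrow> (nat \<Rightarrow> nat) \<Rightarrow> bool" where
  "is_involution n \<pi> \<longleftrightarrow> \<pi> permutes {1..n} \<and> (\<forall>i\<in>{1..n}. \<pi> (\<pi> i) = i)"

definition involutions :: "nat \<Rightarrow> (nat \<Rightarrow> nat) set" where
  "involutions n = {\<pi>. is_involution n \<pi>}"

definition contains_pattern :: "nat \<Rightarrow> (nat \<Rightarrow> nat) \<Rightarrow> nat \<Rightarrow> (nat \<Rightarrow> nat) \<Rightarrow> bool" where
  "contains_pattern n \<pi> m \<sigma> \<longleftrightarrow>
     (\<exists>f. strict_mono_on {1..m} f \<and> f ` {1..m} \<subseteq> {1..n} \<and>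
          (\<forall>a\<in>{1..m}. \<forall>b\<in>{1..m}. \<pi> (f a) < \<pi> (f b) \<longleftrightarrow> \<sigma> a < \<sigma> b))"

definition Fpat :: "nat \<Rightarrow> (nat \<Rightarrow> nat) set" where
  "Fpat k = {\<sigma>. \<sigma> permutes {1..k} \<and> \<sigma> 1 = 1}"

definition inv_avoid :: "nat \<Rightarrow> nat \<Rightarrow> (nat \<Rightarrow> nat) set \<Rightarrow> (nat \<Rightarrow> nat) set" where
  "inv_avoid n m T = {\<pi>. is_involution n \<pi> \<and> (\<forall>\<sigma>\<in>T. \<not> contains_pattern n \<pi> m \<sigma>)}"

definition fixpts :: "nat \<Rightarrow> (nat \<Rightarrow> nat) \<Rightarrow> nat" where
  "fixpts n \<pi> = card {i\<in>{1..n}. \<pi> i = i}"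

fun J :: "nat \<Rightarrow> real \<Rightarrow> real" where
  "J 0 p = 1"
| "J (Suc 0) p = p"
| "J (Suc (Suc n)) p = p * J (Suc n) p + real (Suc n) * J n p"

definition Fgf :: "nat \<Rightarrow> real \<Rightarrow> real fps" where
  "Fgf k p = Abs_fps (\<lambda>n. \<Sum>\<pi>\<in>inv_avoid n k (Fpat k). p ^ fixpts n \<pi>)"

end

theory Submission
  imports Defs
begin


lemma is_inv_iff:
  "is_involution n \<pi> \<longleftrightarrow> (\<forall>x. x \<notin> {1..n} \<longrightarrow> \<pi> x = x) \<and> (\<forall>x\<in>{1..n}. \<pi> x \<in> {1..n} \<and> \<pi> (\<pi> x) = x)"
proof
  assume h: "is_involution n \<pi>"
  hence p: "\<pi> permutes {1..n}" by (simp add: is_involution_def)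
  show "(\<forall>x. x \<notin> {1..n} \<longrightarrow> \<pi> x = x) \<and> (\<forall>x\<in>{1..n}. \<pi> x \<in> {1..n} \<and> \<pi> (\<pi> x) = x)"
    using h p permutes_not_in permutes_in_image unfolding is_involution_def by metis
next
  assume h: "(\<forall>x. x \<notin> {1..n} \<longrightarrow> \<pi> x = x) \<and> (\<forall>x\<in>{1..n}. \<pi> x \<in> {1..n} \<and> \<pi> (\<pi> x) = x)"
  have "inj_on \<pi> {1..n}" by (rule inj_onI) (metis h)
  hence "\<pi> permutes {1..n}" using h by (intro inj_imp_permutes) auto
  thus "is_involution n \<pi>" using h by (simp add: is_involution_def)
qed

lemma finite_involutions: "finite (involutions n)"
proof -
  have "involutions n \<subseteq> {\<pi>. \<pi> permutes {1..n}}" by (auto simp: involutions_def is_involution_def)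
  thus ?thesis using finite_permutations[of "{1..n}"] finite_subset by blast
qed

lemma rank_perm:
  fixes v :: "nat \<Rightarrow> nat"
  assumes inj: "inj_on v {1..k}"
  defines "r \<equiv> \<lambda>a. if a \<in> {1..k} then card {b\<in>{1..k}. v b \<le> v a} else a"
  shows "r permutes {1..k}" and "\<forall>a\<in>{1..k}. \<forall>b\<in>{1..k}. v a < v b \<longleftrightarrow> r a < r b"
proof -
  have mono: "r a < r b" if "a \<in> {1..k}" "b \<in> {1..k}" "v a < v b" for a b
  proof -
    have "{c\<in>{1..k}. v c \<le> v a} \<subseteq> {c\<in>{1..k}. v c \<le> v b}" using that by auto
    moreover have "b \<in> {c\<in>{1..k}. v c \<le> v b} - {c\<in>{1..k}. v c \<le> v a}" using that by auto
    ultimately have "{c\<in>{1..k}. v c \<le> v a} \<subset> {c\<in>{1..k}. v c \<le> v b}" by blast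
    thus ?thesis using that by (simp add: r_def psubset_card_mono)
  qed
  show cmp: "\<forall>a\<in>{1..k}. \<forall>b\<in>{1..k}. v a < v b \<longleftrightarrow> r a < r b"
  proof (intro ballI iffI)
    fix a b assume ab: "a \<in> {1..k}" "b \<in> {1..k}" "r a < r b"
    show "v a < v b"
    proof (rule ccontr)
      assume "\<not> v a < v b"
      hence "v b \<le> v a" by simp
      hence "{c\<in>{1..k}. v c \<le> v b} \<subseteq> {c\<in>{1..k}. v c \<le> v a}" by auto
      hence "r b \<le> r a" using ab by (simp add: r_def card_mono)
      thus False using ab by simp
    qed
  qed (use mono in auto)
  show "r permutes {1..k}"
  proof (rule inj_imp_permutes)
    show "inj_on r {1..k}"
    proof (rule inj_onI)
      fix a b assume ab: "a \<in> {1..k}" "b \<in> {1..k}" "r a = r b"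
      show "a = b"
      proof (rule ccontr)
        assume "a \<noteq> b"
        hence "v a \<noteq> v b" using inj ab by (meson inj_on_eq_iff)
        hence "v a < v b \<or> v b < v a" by auto
        thus False using mono ab by fastforce
      qed
    qed
    show "r x \<in> {1..k}" if "x \<in> {1..k}" for x
    proof -
      have "x \<in> {c\<in>{1..k}. v c \<le> v x}" using that by auto
      hence "card {c\<in>{1..k}. v c \<le> v x} > 0"
        by (subst card_gt_0_iff) auto
      moreover have "card {c\<in>{1..k}. v c \<le> v x} \<le> k"
        using card_mono[of "{1..k}" "{c\<in>{1..k}. v c \<le> v x}"] by fastforce
      ultimately show ?thesis using that by (simp add: r_def)
    qed
  qed (auto simp: r_def)
qed



definition sh :: "nat \<Rightarrow> nat \<Rightarrow> nat" where "sh m i = (if i < m - 1 then i + 1 else i + 2)"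
definition ch :: "nat \<Rightarrow> nat \<Rightarrow> nat" where "ch m j = (if j < m then j - 1 else j - 2)"

definition ins2 :: "nat \<Rightarrow> nat \<Rightarrow> (nat \<Rightarrow> nat) \<Rightarrow> nat \<Rightarrow> nat" where
  "ins2 n m \<sigma> j = (if j = 1 then m else if j = m then 1 else if 2 \<le> j \<and> j \<le> n+2 then sh m (\<sigma> (ch m j)) else j)"
definition del2 :: "nat \<Rightarrow> nat \<Rightarrow> (nat \<Rightarrow> nat) \<Rightarrow> nat \<Rightarrow> nat" where
  "del2 n m \<pi> i = (if 1 \<le> i \<and> i \<le> n then ch m (\<pi> (sh m i)) else i)"

lemma sh_less: "sh m i < sh m j \<longleftrightarrow> i < j"
  by (auto simp: sh_def)
lemma sh_inj: "sh m i = sh m j \<longleftrightarrow> i = j"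
  by (auto simp: sh_def)
lemma ch_sh[simp]: "ch m (sh m i) = i"
  by (auto simp: sh_def ch_def)
lemma sh_ch: "2 \<le> j \<Longrightarrow> j \<noteq> m \<Longrightarrow> sh m (ch m j) = j"
  by (auto simp: sh_def ch_def)
lemma sh_range: "2 \<le> m \<Longrightarrow> m \<le> n+2 \<Longrightarrow> i \<in> {1..n} \<Longrightarrow> sh m i \<in> {2..n+2} \<and> sh m i \<noteq> m"
  by (auto simp: sh_def)
lemma ch_range: "2 \<le> m \<Longrightarrow> m \<le> n+2 \<Longrightarrow> 2 \<le> j \<Longrightarrow> j \<le> n+2 \<Longrightarrow> j \<noteq> m \<Longrightarrow> ch m j \<in> {1..n}"
  by (auto simp: ch_def)
lemma ch_less: "2 \<le> j \<Longrightarrow> j \<noteq> m \<Longrightarrow> 2 \<le> j' \<Longrightarrow> j' \<noteq> m \<Longrightarrow> ch m j < ch m j' \<longleftrightarrow> j < j'"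
  by (metis sh_ch sh_less)

lemma ins2_inv:
  assumes m: "2 \<le> m" "m \<le> n+2" and s: "is_involution n \<sigma>"
  shows "is_involution (n+2) (ins2 n m \<sigma>)" "ins2 n m \<sigma> 1 = m"
proof -
  note S = s[unfolded is_inv_iff]
  have mid: "ins2 n m \<sigma> j \<in> {2..n+2} \<and> ins2 n m \<sigma> j \<noteq> m \<and> ins2 n m \<sigma> (ins2 n m \<sigma> j) = j"
    if j: "2 \<le> j" "j \<le> n+2" "j \<noteq> m" for j
  proof -
    have c: "ch m j \<in> {1..n}" using ch_range j m by blast
    hence sc: "\<sigma> (ch m j) \<in> {1..n}" "\<sigma> (\<sigma> (ch m j)) = ch m j" using S by auto
    have e: "ins2 n m \<sigma> j = sh m (\<sigma> (ch m j))" using j by (simp add: ins2_def)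
    have r: "sh m (\<sigma> (ch m j)) \<in> {2..n+2} \<and> sh m (\<sigma> (ch m j)) \<noteq> m" using sh_range[OF m sc(1)] .
    have "ins2 n m \<sigma> (sh m (\<sigma> (ch m j))) = sh m (\<sigma> (\<sigma> (ch m j)))"
      using r by (simp add: ins2_def)
    also have "\<dots> = j" using sc(2) sh_ch j by simp
    finally show ?thesis using e r by simp
  qed
  show "ins2 n m \<sigma> 1 = m" by (simp add: ins2_def)
  show "is_involution (n+2) (ins2 n m \<sigma>)"
    unfolding is_inv_iff
  proof (intro conjI allI impI ballI)
    fix x assume "x \<notin> {1..n+2}"
    thus "ins2 n m \<sigma> x = x" using m by (auto simp: ins2_def)
  next
    fix x assume x: "x \<in> {1..n+2}"
    show "ins2 n m \<sigma> x \<in> {1..n+2}"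
      using mid[of x] x m by (cases "x = 1 \<or> x = m") (auto simp: ins2_def)
    show "ins2 n m \<sigma> (ins2 n m \<sigma> x) = x"
      using mid[of x] x m by (cases "x = 1 \<or> x = m") (auto simp: ins2_def)
  qed
qed

lemma del2_facts:
  assumes m: "2 \<le> m" "m \<le> n+2" and p: "is_involution (n+2) \<pi>" and p1: "\<pi> 1 = m"
  shows "is_involution n (del2 n m \<pi>)" "ins2 n m (del2 n m \<pi>) = \<pi>"
proof -
  note P = p[unfolded is_inv_iff]
  have pm: "\<pi> m = 1" using P p1 m by (metis atLeastAtMost_iff le_add2 le_numeral_extra(4) one_le_numeral order_trans add_le_mono)
  have mid: "\<pi> j \<in> {2..n+2} \<and> \<pi> j \<noteq> m" if j: "2 \<le> j" "j \<le> n+2" "j \<noteq> m" for j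
  proof -
    have "\<pi> j \<in> {1..n+2}" "\<pi> (\<pi> j) = j" using P j by auto
    moreover have "\<pi> j \<noteq> 1" using pm j p1 \<open>\<pi> (\<pi> j) = j\<close> by metis
    moreover have "\<pi> j \<noteq> m"
    proof
      assume "\<pi> j = m" hence "j = 1" using pm \<open>\<pi> (\<pi> j) = j\<close> by simp
      thus False using j by simp
    qed
    ultimately show ?thesis by auto
  qed
  show "is_involution n (del2 n m \<pi>)"
    unfolding is_inv_iff
  proof (intro conjI allI impI ballI)
    fix x assume "x \<notin> {1..n}"
    thus "del2 n m \<pi> x = x" by (auto simp: del2_def)
  next
    fix x assume x: "x \<in> {1..n}"
    have s: "sh m x \<in> {2..n+2} \<and> sh m x \<noteq> m" using sh_range[OF m x] .
    hence q: "\<pi> (sh m x) \<in> {2..n+2} \<and> \<pi> (sh m x) \<noteq> m" using mid by auto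
    have d: "del2 n m \<pi> x = ch m (\<pi> (sh m x))" using x by (simp add: del2_def)
    have cr: "ch m (\<pi> (sh m x)) \<in> {1..n}" using q ch_range m by auto
    thus "del2 n m \<pi> x \<in> {1..n}" using d by simp
    have "del2 n m \<pi> (ch m (\<pi> (sh m x))) = ch m (\<pi> (sh m (ch m (\<pi> (sh m x)))))"
      using cr by (simp add: del2_def)
    also have "\<dots> = ch m (\<pi> (\<pi> (sh m x)))" using q sh_ch by simp
    also have "\<dots> = x" using P s by auto
    finally show "del2 n m \<pi> (del2 n m \<pi> x) = x" using d by simp
  qed
  show "ins2 n m (del2 n m \<pi>) = \<pi>"
  proof
    fix j
    show "ins2 n m (del2 n m \<pi>) j = \<pi> j"
    proof (cases "j = 1 \<or> j = m \<or> \<not> (2 \<le> j \<and> j \<le> n+2)")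
      case True
      then show ?thesis using p1 pm P m by (auto simp: ins2_def)
    next
      case False
      hence j: "2 \<le> j" "j \<le> n+2" "j \<noteq> m" "j \<noteq> 1" by auto
      have c: "ch m j \<in> {1..n}" using ch_range j m by blast
      have "ins2 n m (del2 n m \<pi>) j = sh m (ch m (\<pi> (sh m (ch m j))))"
        using j c by (simp add: ins2_def del2_def)
      also have "\<dots> = \<pi> j" using j sh_ch mid[OF j(1-3)] by simp
      finally show ?thesis .
    qed
  qed
qed

lemma del_ins2:
  assumes "is_involution n \<sigma>" shows "del2 n m (ins2 n m \<sigma>) = \<sigma>"
proof
  fix i
  show "del2 n m (ins2 n m \<sigma>) i = \<sigma> i"
  proof (cases "i \<in> {1..n}")
    case True
    have "sh m i \<noteq> 1" "sh m i \<noteq> m" "2 \<le> sh m i" "sh m i \<le> n+2" using True by (auto simp: sh_def)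
    then show ?thesis using True by (simp add: del2_def ins2_def)
  next
    case False
    then show ?thesis using assms by (auto simp: del2_def is_inv_iff)
  qed
qed

lemma fix_ins2:
  assumes m: "2 \<le> m" "m \<le> n+2" and s: "is_involution n \<sigma>"
  shows "fixpts (n+2) (ins2 n m \<sigma>) = fixpts n \<sigma>"
proof -
  have "{i\<in>{1..n+2}. ins2 n m \<sigma> i = i} = sh m ` {i\<in>{1..n}. \<sigma> i = i}"
  proof (intro equalityI subsetI)
    fix j assume j: "j \<in> {i\<in>{1..n+2}. ins2 n m \<sigma> i = i}"
    hence j2: "j \<noteq> 1" "j \<noteq> m" using m by (auto simp: ins2_def)
    hence jj: "2 \<le> j" "j \<le> n+2" using j by auto
    hence e: "sh m (\<sigma> (ch m j)) = j" using j j2 by (simp add: ins2_def)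
    have "\<sigma> (ch m j) = ch m j" using e sh_ch[of j m] jj j2 by (metis ch_sh)
    moreover have "ch m j \<in> {1..n}" using ch_range jj j2 m by blast
    ultimately show "j \<in> sh m ` {i\<in>{1..n}. \<sigma> i = i}" using sh_ch[of j m] jj j2 by (metis (mono_tags, lifting) image_eqI mem_Collect_eq)
  next
    fix j assume "j \<in> sh m ` {i\<in>{1..n}. \<sigma> i = i}"
    then obtain i where i: "i \<in> {1..n}" "\<sigma> i = i" "j = sh m i" by auto
    have "sh m i \<in> {2..n+2} \<and> sh m i \<noteq> m" using sh_range[OF m i(1)] .
    thus "j \<in> {i\<in>{1..n+2}. ins2 n m \<sigma> i = i}" using i by (auto simp: ins2_def)
  qed
  moreover have "inj (sh m)" by (auto intro: injI simp: sh_inj)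
  ultimately show ?thesis unfolding fixpts_def by (simp add: card_image inj_on_subset)
qed



definition ins1 :: "nat \<Rightarrow> (nat \<Rightarrow> nat) \<Rightarrow> nat \<Rightarrow> nat" where
  "ins1 n \<sigma> j = (if j = 1 then 1 else if 2 \<le> j \<and> j \<le> n+1 then Suc (\<sigma> (j - 1)) else j)"
definition del1 :: "nat \<Rightarrow> (nat \<Rightarrow> nat) \<Rightarrow> nat \<Rightarrow> nat" where
  "del1 n \<pi> i = (if 1 \<le> i \<and> i \<le> n then \<pi> (Suc i) - 1 else i)"

lemma ins1_inv:
  assumes s: "is_involution n \<sigma>"
  shows "is_involution (n+1) (ins1 n \<sigma>)" "ins1 n \<sigma> 1 = 1"
proof -
  note S = s[unfolded is_inv_iff]
  show "ins1 n \<sigma> 1 = 1" by (simp add: ins1_def)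
  show "is_involution (n+1) (ins1 n \<sigma>)"
    unfolding is_inv_iff
  proof (intro conjI allI impI ballI)
    fix x assume "x \<notin> {1..n+1}"
    thus "ins1 n \<sigma> x = x" by (auto simp: ins1_def)
  next
    fix x assume x: "x \<in> {1..n+1}"
    show "ins1 n \<sigma> x \<in> {1..n+1}"
    proof (cases "x = 1")
      case False
      hence "x - 1 \<in> {1..n}" using x by auto
      thus ?thesis using S x False by (auto simp: ins1_def)
    qed (simp add: ins1_def)
    show "ins1 n \<sigma> (ins1 n \<sigma> x) = x"
    proof (cases "x = 1")
      case False
      hence "x - 1 \<in> {1..n}" using x by auto
      hence "\<sigma> (x - 1) \<in> {1..n}" "\<sigma> (\<sigma> (x - 1)) = x - 1" using S by auto
      thus ?thesis using x False by (auto simp: ins1_def)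
    qed (simp add: ins1_def)
  qed
qed

lemma del1_facts:
  assumes p: "is_involution (n+1) \<pi>" and p1: "\<pi> 1 = 1"
  shows "is_involution n (del1 n \<pi>)" "ins1 n (del1 n \<pi>) = \<pi>"
proof -
  note P = p[unfolded is_inv_iff]
  have mid: "\<pi> j \<in> {2..n+1}" if j: "2 \<le> j" "j \<le> n+1" for j
  proof -
    have "\<pi> j \<in> {1..n+1}" "\<pi> (\<pi> j) = j" using P j by auto
    moreover have "\<pi> j \<noteq> 1" using p1 j \<open>\<pi> (\<pi> j) = j\<close> by auto
    ultimately show ?thesis by auto
  qed
  show "is_involution n (del1 n \<pi>)"
    unfolding is_inv_iff
  proof (intro conjI allI impI ballI)
    fix x assume "x \<notin> {1..n}"
    thus "del1 n \<pi> x = x" by (auto simp: del1_def)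
  next
    fix x assume x: "x \<in> {1..n}"
    have q: "\<pi> (Suc x) \<in> {2..n+1}" using mid x by auto
    thus "del1 n \<pi> x \<in> {1..n}" using x by (auto simp: del1_def)
    have "Suc (\<pi> (Suc x) - 1) = \<pi> (Suc x)" using q by auto
    thus "del1 n \<pi> (del1 n \<pi> x) = x" using q x P by (auto simp: del1_def)
  qed
  show "ins1 n (del1 n \<pi>) = \<pi>"
  proof
    fix j
    show "ins1 n (del1 n \<pi>) j = \<pi> j"
    proof (cases "j = 1 \<or> \<not> (2 \<le> j \<and> j \<le> n+1)")
      case True
      then show ?thesis using p1 P by (auto simp: ins1_def)
    next
      case False
      hence j: "2 \<le> j" "j \<le> n+1" by auto
      show ?thesis using mid[OF j] j by (auto simp: ins1_def del1_def)
    qed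
  qed
qed

lemma del_ins1:
  assumes "is_involution n \<sigma>" shows "del1 n (ins1 n \<sigma>) = \<sigma>"
proof
  fix i
  show "del1 n (ins1 n \<sigma>) i = \<sigma> i"
    using assms by (auto simp: del1_def ins1_def is_inv_iff)
qed

lemma fix_ins1:
  assumes s: "is_involution n \<sigma>"
  shows "fixpts (n+1) (ins1 n \<sigma>) = fixpts n \<sigma> + 1"
proof -
  have "{i\<in>{1..n+1}. ins1 n \<sigma> i = i} = insert 1 (Suc ` {i\<in>{1..n}. \<sigma> i = i})"
  proof (intro equalityI subsetI)
    fix j assume j: "j \<in> {i\<in>{1..n+1}. ins1 n \<sigma> i = i}"
    show "j \<in> insert 1 (Suc ` {i\<in>{1..n}. \<sigma> i = i})"
    proof (cases "j = 1")
      case False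
      hence "j - 1 \<in> {1..n}" "\<sigma> (j - 1) = j - 1" "j = Suc (j - 1)" using j by (auto simp: ins1_def)
      thus ?thesis by blast
    qed simp
  next
    fix j assume "j \<in> insert 1 (Suc ` {i\<in>{1..n}. \<sigma> i = i})"
    thus "j \<in> {i\<in>{1..n+1}. ins1 n \<sigma> i = i}" by (auto simp: ins1_def)
  qed
  moreover have "1 \<notin> Suc ` {i\<in>{1..n}. \<sigma> i = i}" by auto
  ultimately show ?thesis unfolding fixpts_def by (simp add: card_image)
qed

lemma img1: "{\<pi>\<in>involutions (n+1). \<pi> 1 = 1} = ins1 n ` involutions n"
  and inj1: "inj_on (ins1 n) (involutions n)"
proof -
  show "{\<pi>\<in>involutions (n+1). \<pi> 1 = 1} = ins1 n ` involutions n"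
  proof (intro equalityI subsetI)
    fix \<pi> assume "\<pi> \<in> {\<pi>\<in>involutions (n+1). \<pi> 1 = 1}"
    hence "is_involution (n+1) \<pi>" "\<pi> 1 = 1" by (auto simp: involutions_def)
    thus "\<pi> \<in> ins1 n ` involutions n" using del1_facts
      by (metis image_eqI involutions_def mem_Collect_eq)
  next
    fix \<pi> assume "\<pi> \<in> ins1 n ` involutions n"
    then obtain \<sigma> where "is_involution n \<sigma>" "\<pi> = ins1 n \<sigma>" by (auto simp: involutions_def)
    thus "\<pi> \<in> {\<pi>\<in>involutions (n+1). \<pi> 1 = 1}" using ins1_inv[of n \<sigma>] by (simp add: involutions_def)
  qed
  show "inj_on (ins1 n) (involutions n)"
    by (rule inj_on_inverseI[where g="del1 n"]) (auto simp: involutions_def del_ins1)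
qed

lemma img2: "2 \<le> m \<Longrightarrow> m \<le> n+2 \<Longrightarrow> {\<pi>\<in>involutions (n+2). \<pi> 1 = m} = ins2 n m ` involutions n"
proof (intro equalityI subsetI)
  fix \<pi> assume m: "2 \<le> m" "m \<le> n+2" and "\<pi> \<in> {\<pi>\<in>involutions (n+2). \<pi> 1 = m}"
  hence "is_involution (n+2) \<pi>" "\<pi> 1 = m" by (auto simp: involutions_def)
  thus "\<pi> \<in> ins2 n m ` involutions n" using del2_facts m
    by (metis image_eqI involutions_def mem_Collect_eq)
next
  fix \<pi> assume m: "2 \<le> m" "m \<le> n+2" and "\<pi> \<in> ins2 n m ` involutions n"
  then obtain \<sigma> where "is_involution n \<sigma>" "\<pi> = ins2 n m \<sigma>" by (auto simp: involutions_def)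
  thus "\<pi> \<in> {\<pi>\<in>involutions (n+2). \<pi> 1 = m}" using ins2_inv[OF m, of \<sigma>] by (simp add: involutions_def)
qed

lemma inj2: "inj_on (ins2 n m) (involutions n)"
  by (rule inj_on_inverseI[where g="del2 n m"]) (auto simp: involutions_def del_ins2)

definition Tsum :: "nat \<Rightarrow> real \<Rightarrow> real" where
  "Tsum n p = (\<Sum>\<pi>\<in>involutions n. p ^ fixpts n \<pi>)"

lemma inv_small: "n \<le> 1 \<Longrightarrow> involutions n = {id}"
proof (intro equalityI subsetI)
  fix \<pi> assume n: "n \<le> 1" and "\<pi> \<in> involutions n"
  hence P: "(\<forall>x. x \<notin> {1..n} \<longrightarrow> \<pi> x = x) \<and> (\<forall>x\<in>{1..n}. \<pi> x \<in> {1..n} \<and> \<pi> (\<pi> x) = x)"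
    by (simp add: involutions_def is_inv_iff)
  have "\<pi> x = x" for x
  proof (cases "x \<in> {1..n}")
    case True
    hence "\<pi> x \<in> {1..n}" using P by auto
    thus ?thesis using True n by auto
  qed (use P in auto)
  thus "\<pi> \<in> {id}" by auto
qed (auto simp: involutions_def is_inv_iff)

lemma Tsum_rec: "Tsum (n+2) p = p * Tsum (n+1) p + real (n+1) * Tsum n p"
proof -
  have fin: "finite (involutions (n+2))" by (rule finite_involutions)
  have sub: "(\<lambda>\<pi>. \<pi> 1) ` involutions (n+2) \<subseteq> {1..n+2}"
    by (auto simp: involutions_def is_inv_iff)
  have "Tsum (n+2) p = (\<Sum>m\<in>{1..n+2}. \<Sum>\<pi>\<in>{\<pi>\<in>involutions (n+2). \<pi> 1 = m}. p ^ fixpts (n+2) \<pi>)"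
    unfolding Tsum_def by (rule sum.group[OF fin _ sub, symmetric]) simp
  also have "{1..n+2} = insert 1 {2..n+2}" by auto
  also have "(\<Sum>m\<in>insert 1 {2..n+2}. \<Sum>\<pi>\<in>{\<pi>\<in>involutions (n+2). \<pi> 1 = m}. p ^ fixpts (n+2) \<pi>)
     = (\<Sum>\<pi>\<in>{\<pi>\<in>involutions (n+1+1). \<pi> 1 = 1}. p ^ fixpts (n+1+1) \<pi>)
       + (\<Sum>m\<in>{2..n+2}. \<Sum>\<pi>\<in>{\<pi>\<in>involutions (n+2). \<pi> 1 = m}. p ^ fixpts (n+2) \<pi>)"
    by (simp add: add.assoc)
  also have "(\<Sum>\<pi>\<in>{\<pi>\<in>involutions (n+1+1). \<pi> 1 = 1}. p ^ fixpts (n+1+1) \<pi>) = p * Tsum (n+1) p"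
  proof -
    have "(\<Sum>\<pi>\<in>{\<pi>\<in>involutions (n+1+1). \<pi> 1 = 1}. p ^ fixpts (n+1+1) \<pi>)
       = sum ((\<lambda>\<pi>. p ^ fixpts (n+1+1) \<pi>) \<circ> ins1 (n+1)) (involutions (n+1))"
      unfolding img1 by (rule sum.reindex[OF inj1])
    also have "\<dots> = (\<Sum>\<sigma>\<in>involutions (n+1). p * p ^ fixpts (n+1) \<sigma>)"
    proof (rule sum.cong)
      fix \<sigma> assume "\<sigma> \<in> involutions (n+1)"
      hence "fixpts (n+1+1) (ins1 (n+1) \<sigma>) = fixpts (n+1) \<sigma> + 1"
        by (intro fix_ins1) (simp add: involutions_def)
      thus "((\<lambda>\<pi>. p ^ fixpts (n+1+1) \<pi>) \<circ> ins1 (n+1)) \<sigma> = p * p ^ fixpts (n+1) \<sigma>" by simp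
    qed simp
    finally show ?thesis by (simp add: Tsum_def sum_distrib_left)
  qed
  also have "(\<Sum>m\<in>{2..n+2}. \<Sum>\<pi>\<in>{\<pi>\<in>involutions (n+2). \<pi> 1 = m}. p ^ fixpts (n+2) \<pi>)
      = (\<Sum>m\<in>{2..n+2}. Tsum n p)"
  proof (rule sum.cong)
    fix m assume "m \<in> {2..n+2}"
    hence m: "2 \<le> m" "m \<le> n+2" by auto
    have "(\<Sum>\<pi>\<in>{\<pi>\<in>involutions (n+2). \<pi> 1 = m}. p ^ fixpts (n+2) \<pi>)
       = sum ((\<lambda>\<pi>. p ^ fixpts (n+2) \<pi>) \<circ> ins2 n m) (involutions n)"
      unfolding img2[OF m] by (rule sum.reindex[OF inj2])
    also have "\<dots> = Tsum n p" unfolding Tsum_def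
    proof (rule sum.cong)
      fix \<sigma> assume "\<sigma> \<in> involutions n"
      hence "fixpts (n+2) (ins2 n m \<sigma>) = fixpts n \<sigma>"
        by (intro fix_ins2 m) (simp add: involutions_def)
      thus "((\<lambda>\<pi>. p ^ fixpts (n+2) \<pi>) \<circ> ins2 n m) \<sigma> = p ^ fixpts n \<sigma>" by simp
    qed simp
    finally show "(\<Sum>\<pi>\<in>{\<pi>\<in>involutions (n+2). \<pi> 1 = m}. p ^ fixpts (n+2) \<pi>) = Tsum n p" .
  qed simp
  finally show ?thesis by simp
qed

lemma Tsum_J: "Tsum n p = J n p"
proof (induction n p rule: J.induct)
  case (1 p) thus ?case by (simp add: Tsum_def inv_small fixpts_def)
next
  case (2 p) thus ?case by (simp add: Tsum_def inv_small fixpts_def)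
next
  case (3 n p)
  thus ?case using Tsum_rec[where n=n and p=p] by (simp add: add.commute)
qed



lemma inv_inj: "is_involution n \<pi> \<Longrightarrow> inj \<pi>"
  by (rule injI) (metis is_inv_iff)

lemma inv_pp: "is_involution n \<pi> \<Longrightarrow> \<pi> (\<pi> x) = x"
  by (metis is_inv_iff)

lemma inv_range: "is_involution n \<pi> \<Longrightarrow> x \<in> {1..n} \<Longrightarrow> \<pi> x \<in> {1..n}"
  by (metis is_inv_iff)

lemma small_avoid:
  assumes "n < k" shows "\<not> contains_pattern n \<pi> k \<sigma>"
proof
  assume "contains_pattern n \<pi> k \<sigma>"
  then obtain f where f: "strict_mono_on {1..k} f" "f ` {1..k} \<subseteq> {1..n}"
    unfolding contains_pattern_def by blast
  have "card {1..k} \<le> card {1..n}"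
    using card_inj_on_le[OF strict_mono_on_imp_inj_on[OF f(1)] f(2)] by simp
  thus False using assms by simp
qed

lemma inv_avoid_small: "n < k \<Longrightarrow> inv_avoid n k T = involutions n"
  using small_avoid by (auto simp: inv_avoid_def involutions_def)

lemma P1:
  assumes p: "is_involution N \<pi>" and p1: "\<pi> 1 = m" and mk: "m + k - 1 \<le> N" and k: "k \<ge> 1"
  shows "\<exists>\<sigma>\<in>Fpat k. contains_pattern N \<pi> k \<sigma>"
proof -
  note P = p[unfolded is_inv_iff]
  have N1: "1 \<in> {1..N}"
  proof (rule ccontr)
    assume "1 \<notin> {1..N}"
    hence "\<pi> 1 = 1" using P by blast
    hence "m = 1" using p1 by simp
    thus False using mk k \<open>1 \<notin> {1..N}\<close> by auto
  qed
  hence m: "m \<in> {1..N}" using P p1 by auto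
  have pm: "\<pi> m = 1" using inv_pp[OF p] p1 by metis
  define f where "f a = m + a - 1" for a
  define v where "v a = \<pi> (f a)" for a
  have fr: "f a \<in> {1..N}" if "a \<in> {1..k}" for a using that m mk by (auto simp: f_def)
  have injv: "inj_on v {1..k}"
  proof (rule inj_onI)
    fix x y assume xy: "x \<in> {1..k}" "y \<in> {1..k}" "v x = v y"
    hence "f x = f y" using inv_inj[OF p] by (simp add: v_def inj_eq)
    thus "x = y" using xy m unfolding f_def by auto
  qed
  define r where "r \<equiv> \<lambda>a. if a \<in> {1..k} then card {b\<in>{1..k}. v b \<le> v a} else a"
  have rp: "r permutes {1..k}" and rc: "\<forall>a\<in>{1..k}. \<forall>b\<in>{1..k}. v a < v b \<longleftrightarrow> r a < r b"
    using rank_perm[OF injv] unfolding r_def by auto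
  have v1: "v 1 = 1" by (simp add: v_def f_def pm)
  have "{b\<in>{1..k}. v b \<le> v 1} = {1}"
  proof (intro equalityI subsetI)
    fix b assume b: "b \<in> {b\<in>{1..k}. v b \<le> v 1}"
    hence "\<pi> (f b) \<in> {1..N}" using fr P by auto
    hence "v b = 1" using b v1 by (auto simp: v_def)
    hence "\<pi> (f b) = \<pi> m" using pm by (simp add: v_def)
    hence "f b = m" using inv_inj[OF p] by (simp add: inj_eq)
    thus "b \<in> {1}" using b by (auto simp: f_def)
  qed (use k in auto)
  hence r1: "r 1 = 1" using k by (simp add: r_def)
  have "contains_pattern N \<pi> k r"
    unfolding contains_pattern_def
  proof (intro exI conjI)
    show "strict_mono_on {1..k} f" by (auto simp: monotone_on_def f_def)
    show "f ` {1..k} \<subseteq> {1..N}" using fr by auto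
    show "\<forall>a\<in>{1..k}. \<forall>b\<in>{1..k}. (\<pi> (f a) < \<pi> (f b)) = (r a < r b)"
      using rc by (simp add: v_def)
  qed
  moreover have "r \<in> Fpat k" using rp r1 by (simp add: Fpat_def)
  ultimately show ?thesis by blast
qed

lemma P2:
  assumes s: "is_involution n \<sigma>" and m: "2 \<le> m" "m \<le> n+2" and c: "contains_pattern n \<sigma> k \<tau>"
  shows "contains_pattern (n+2) (ins2 n m \<sigma>) k \<tau>"
proof -
  obtain f where f: "strict_mono_on {1..k} f" "f ` {1..k} \<subseteq> {1..n}"
    "\<forall>a\<in>{1..k}. \<forall>b\<in>{1..k}. \<sigma> (f a) < \<sigma> (f b) \<longleftrightarrow> \<tau> a < \<tau> b"
    using c unfolding contains_pattern_def by blast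
  have e: "ins2 n m \<sigma> (sh m (f a)) = sh m (\<sigma> (f a))" if "a \<in> {1..k}" for a
  proof -
    have "sh m (f a) \<in> {2..n+2} \<and> sh m (f a) \<noteq> m" using sh_range[OF m] f(2) that by blast
    thus ?thesis by (simp add: ins2_def)
  qed
  show ?thesis
    unfolding contains_pattern_def
  proof (intro exI conjI)
    show "strict_mono_on {1..k} (sh m \<circ> f)"
      using f(1) by (auto simp: monotone_on_def sh_less)
    show "(sh m \<circ> f) ` {1..k} \<subseteq> {1..n+2}" using f(2) sh_range[OF m] by fastforce
    show "\<forall>a\<in>{1..k}. \<forall>b\<in>{1..k}. (ins2 n m \<sigma> ((sh m \<circ> f) a) < ins2 n m \<sigma> ((sh m \<circ> f) b)) = (\<tau> a < \<tau> b)"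
      using f(3) e by (simp add: sh_less)
  qed
qed

lemma pigeon:
  fixes k m n :: nat
  assumes "inj_on h {2..k}" "h ` {2..k} \<subseteq> {m+1..n+2}" "n+2 \<le> m + k - 2" "k \<ge> 2"
  shows False
proof -
  have "card {2..k} \<le> card {m+1..n+2}" using card_inj_on_le[OF assms(1,2)] by simp
  thus False using assms(3,4) by simp
qed

lemma P3:
  assumes s: "is_involution n \<sigma>" and m: "2 \<le> m" "m \<le> n+2" and mk: "n+2 \<le> m + k - 2"
    and k: "k \<ge> 2" and t: "\<tau> \<in> Fpat k" and c: "contains_pattern (n+2) (ins2 n m \<sigma>) k \<tau>"
  shows "contains_pattern n \<sigma> k \<tau>"
proof -
  define \<pi> where "\<pi> = ins2 n m \<sigma>"
  have p: "is_involution (n+2) \<pi>" and p1: "\<pi> 1 = m" using ins2_inv[OF m s] by (auto simp: \<pi>_def)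
  note P = p[unfolded is_inv_iff]
  have pm: "\<pi> m = 1" using inv_pp[OF p] p1 by metis
  have pinj: "inj \<pi>" using inv_inj[OF p] .
  obtain f where f: "strict_mono_on {1..k} f" "f ` {1..k} \<subseteq> {1..n+2}"
    "\<forall>a\<in>{1..k}. \<forall>b\<in>{1..k}. \<pi> (f a) < \<pi> (f b) \<longleftrightarrow> \<tau> a < \<tau> b"
    using c unfolding contains_pattern_def \<pi>_def by blast
  have finj: "inj_on f {1..k}" using strict_mono_on_imp_inj_on[OF f(1)] .
  have tp: "\<tau> permutes {1..k}" "\<tau> 1 = 1" using t by (auto simp: Fpat_def)
  have tgt: "\<tau> 1 < \<tau> b" if "b \<in> {2..k}" for b
  proof -
    have "\<tau> b \<in> {1..k}" using that permutes_in_image[OF tp(1)] by auto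
    moreover have "b \<noteq> 1" using that by simp
    hence "\<tau> b \<noteq> \<tau> 1" using inj_eq[OF permutes_inj[OF tp(1)]] by simp
    ultimately show ?thesis using tp(2) by auto
  qed
  have k1: "1 \<in> {1..k}" using k by auto
  have less1: "\<pi> (f 1) < \<pi> (f b)" "f 1 < f b" if "b \<in> {2..k}" for b
  proof -
    have b1: "b \<in> {1..k}" using that by simp
    have "\<pi> (f 1) < \<pi> (f b) \<longleftrightarrow> \<tau> 1 < \<tau> b" using f(3) k1 b1 by blast
    thus "\<pi> (f 1) < \<pi> (f b)" using tgt[OF that] by blast
    show "f 1 < f b" using f(1) k1 that by (auto simp: monotone_on_def)
  qed
  have fb: "f b \<in> {1..n+2}" if "b \<in> {1..k}" for b using f(2) that by blast
  have pb: "\<pi> (f b) \<in> {1..n+2}" if "b \<in> {1..k}" for b using inv_range[OF p fb[OF that]] .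
  have f1a: "f 1 \<noteq> 1"
  proof
    assume f11: "f 1 = 1"
    show False
    proof (rule pigeon[of "\<pi> \<circ> f" k m n])
      show "inj_on (\<pi> \<circ> f) {2..k}"
        by (rule comp_inj_on[OF inj_on_subset[OF finj] inj_on_subset[OF pinj]]) auto
      show "(\<pi> \<circ> f) ` {2..k} \<subseteq> {m+1..n+2}"
      proof
        fix y assume "y \<in> (\<pi> \<circ> f) ` {2..k}"
        then obtain b where b: "b \<in> {2..k}" "y = \<pi> (f b)" by auto
        have "\<pi> (f b) > m" using less1(1)[OF b(1)] f11 p1 by simp
        moreover have "b \<in> {1..k}" using b by simp
        hence "\<pi> (f b) \<le> n+2" using pb by simp
        ultimately show "y \<in> {m+1..n+2}" using b by simp
      qed
    qed (use mk k in auto)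
  qed
  have f1b: "f 1 \<noteq> m"
  proof
    assume f11: "f 1 = m"
    show False
    proof (rule pigeon[of f k m n])
      show "inj_on f {2..k}" by (rule inj_on_subset[OF finj]) auto
      show "f ` {2..k} \<subseteq> {m+1..n+2}"
      proof
        fix y assume "y \<in> f ` {2..k}"
        then obtain b where b: "b \<in> {2..k}" "y = f b" by auto
        have "f b > m" using less1(2)[OF b(1)] f11 by simp
        moreover have "b \<in> {1..k}" using b by simp
        hence "f b \<le> n+2" using fb by simp
        ultimately show "y \<in> {m+1..n+2}" using b by simp
      qed
    qed (use mk k in auto)
  qed
  have key: "f a \<noteq> 1 \<and> f a \<noteq> m" if a: "a \<in> {1..k}" for a
  proof (cases "a = 1")
    case True thus ?thesis using f1a f1b by simp
  next
    case False
    hence a2: "a \<in> {2..k}" using a by auto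
    have "f a \<noteq> 1" using less1(2)[OF a2] fb[OF k1] by auto
    moreover have "f a \<noteq> m"
    proof
      assume "f a = m"
      hence "\<pi> (f a) = 1" using pm by simp
      moreover have "\<pi> (f 1) \<noteq> 1" using f1b pm pinj by (metis inj_eq)
      moreover have "\<pi> (f 1) \<ge> 1" using pb k1 by auto
      ultimately show False using less1(1)[OF a2] by auto
    qed
    ultimately show ?thesis by simp
  qed
  have fr: "2 \<le> f a \<and> f a \<le> n+2 \<and> f a \<noteq> m" if "a \<in> {1..k}" for a
    using key[OF that] fb[OF that] by auto
  have e: "\<pi> (f a) = sh m (\<sigma> (ch m (f a)))" if "a \<in> {1..k}" for a
    using key[OF that] fr[OF that] by (simp add: \<pi>_def ins2_def)
  show ?thesis
    unfolding contains_pattern_def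
  proof (intro exI conjI)
    show "strict_mono_on {1..k} (ch m \<circ> f)"
      unfolding monotone_on_def
    proof (intro ballI impI)
      fix a b assume ab: "a \<in> {1..k}" "b \<in> {1..k}" "a < b"
      hence "f a < f b" using f(1) by (simp add: monotone_on_def)
      moreover have "2 \<le> f a" "f a \<noteq> m" "2 \<le> f b" "f b \<noteq> m" using fr[OF ab(1)] fr[OF ab(2)] by auto
      ultimately show "(ch m \<circ> f) a < (ch m \<circ> f) b" using ch_less by simp
    qed
    show "(ch m \<circ> f) ` {1..k} \<subseteq> {1..n}"
    proof
      fix y assume "y \<in> (ch m \<circ> f) ` {1..k}"
      then obtain a where a: "a \<in> {1..k}" "y = ch m (f a)" by auto
      show "y \<in> {1..n}" using a(2) ch_range[OF m] fr[OF a(1)] by blast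
    qed
    show "\<forall>a\<in>{1..k}. \<forall>b\<in>{1..k}. (\<sigma> ((ch m \<circ> f) a) < \<sigma> ((ch m \<circ> f) b)) = (\<tau> a < \<tau> b)"
    proof (intro ballI)
      fix a b assume ab: "a \<in> {1..k}" "b \<in> {1..k}"
      have "\<pi> (f a) < \<pi> (f b) \<longleftrightarrow> \<tau> a < \<tau> b" using f(3) ab by blast
      thus "(\<sigma> ((ch m \<circ> f) a) < \<sigma> ((ch m \<circ> f) b)) = (\<tau> a < \<tau> b)"
        using e[OF ab(1)] e[OF ab(2)] by (simp add: sh_less)
    qed
  qed
qed



definition Ssum :: "nat \<Rightarrow> nat \<Rightarrow> real \<Rightarrow> real" where
  "Ssum k N p = (\<Sum>\<pi>\<in>inv_avoid N k (Fpat k). p ^ fixpts N \<pi>)"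

lemma inv_avoid_sub: "inv_avoid N k T \<subseteq> involutions N"
  by (auto simp: inv_avoid_def involutions_def)

lemma finite_inv_avoid: "finite (inv_avoid N k T)"
  using finite_subset[OF inv_avoid_sub finite_involutions] .

lemma A_empty:
  assumes k: "k \<ge> 2" and mk: "m + k - 1 \<le> N"
  shows "{\<pi>\<in>inv_avoid N k (Fpat k). \<pi> 1 = m} = {}"
  using P1[OF _ _ mk] k by (fastforce simp: inv_avoid_def)

lemma A_img:
  assumes k: "k \<ge> 2" and nk: "k \<le> n+2" and m: "n+4-k \<le> m" "m \<le> n+2"
  shows "{\<pi>\<in>inv_avoid (n+2) k (Fpat k). \<pi> 1 = m} = ins2 n m ` inv_avoid n k (Fpat k)"
proof -
  have m2: "2 \<le> m" "m \<le> n+2" using m nk by auto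
  have mk: "n+2 \<le> m + k - 2" using m k nk by auto
  show ?thesis
  proof (intro equalityI subsetI)
    fix \<pi> assume "\<pi> \<in> {\<pi>\<in>inv_avoid (n+2) k (Fpat k). \<pi> 1 = m}"
    hence p: "is_involution (n+2) \<pi>" "\<pi> 1 = m" and av: "\<forall>\<tau>\<in>Fpat k. \<not> contains_pattern (n+2) \<pi> k \<tau>"
      by (auto simp: inv_avoid_def)
    note d = del2_facts[OF m2 p]
    have "\<forall>\<tau>\<in>Fpat k. \<not> contains_pattern n (del2 n m \<pi>) k \<tau>"
      using P2[OF d(1) m2] av d(2) by metis
    hence "del2 n m \<pi> \<in> inv_avoid n k (Fpat k)" using d(1) by (simp add: inv_avoid_def)
    thus "\<pi> \<in> ins2 n m ` inv_avoid n k (Fpat k)" using d(2) by (metis image_eqI)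
  next
    fix \<pi> assume "\<pi> \<in> ins2 n m ` inv_avoid n k (Fpat k)"
    then obtain \<sigma> where s: "is_involution n \<sigma>" "\<forall>\<tau>\<in>Fpat k. \<not> contains_pattern n \<sigma> k \<tau>"
      and pe: "\<pi> = ins2 n m \<sigma>" by (auto simp: inv_avoid_def)
    have "\<forall>\<tau>\<in>Fpat k. \<not> contains_pattern (n+2) \<pi> k \<tau>"
      using P3[OF s(1) m2 mk k] s(2) pe by metis
    thus "\<pi> \<in> {\<pi>\<in>inv_avoid (n+2) k (Fpat k). \<pi> 1 = m}"
      using ins2_inv[OF m2 s(1)] pe by (simp add: inv_avoid_def)
  qed
qed

lemma Ssum_rec:
  assumes k: "k \<ge> 2" and nk: "k \<le> n+2"
  shows "Ssum k (n+2) p = real (k-1) * Ssum k n p"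
proof -
  let ?g = "\<lambda>m. \<Sum>\<pi>\<in>{\<pi>\<in>inv_avoid (n+2) k (Fpat k). \<pi> 1 = m}. p ^ fixpts (n+2) \<pi>"
  have sub: "(\<lambda>\<pi>. \<pi> 1) ` inv_avoid (n+2) k (Fpat k) \<subseteq> {1..n+2}"
    by (auto simp: inv_avoid_def is_inv_iff)
  have "Ssum k (n+2) p = (\<Sum>m\<in>{1..n+2}. ?g m)"
    unfolding Ssum_def by (rule sum.group[OF finite_inv_avoid _ sub, symmetric]) simp
  also have "\<dots> = (\<Sum>m\<in>{n+4-k..n+2}. ?g m)"
  proof (rule sum.mono_neutral_right)
    show "\<forall>i\<in>{1..n+2} - {n+4-k..n+2}. ?g i = 0"
    proof
      fix i assume "i \<in> {1..n+2} - {n+4-k..n+2}"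
      hence "i + k - 1 \<le> n+2" using nk by auto
      hence "{\<pi>\<in>inv_avoid (n+2) k (Fpat k). \<pi> 1 = i} = {}" by (rule A_empty[OF k])
      thus "?g i = 0" by (simp only: sum.empty)
    qed
  qed (use nk in auto)
  also have "\<dots> = (\<Sum>m\<in>{n+4-k..n+2}. Ssum k n p)"
  proof (rule sum.cong)
    fix m assume "m \<in> {n+4-k..n+2}"
    hence m: "n+4-k \<le> m" "m \<le> n+2" by auto
    hence m2: "2 \<le> m" "m \<le> n+2" using nk by auto
    have inj: "inj_on (ins2 n m) (inv_avoid n k (Fpat k))"
      using inj_on_subset[OF inj2 inv_avoid_sub] .
    have "?g m = sum ((\<lambda>\<pi>. p ^ fixpts (n+2) \<pi>) \<circ> ins2 n m) (inv_avoid n k (Fpat k))"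
      unfolding A_img[OF k nk m] by (rule sum.reindex[OF inj])
    also have "\<dots> = Ssum k n p" unfolding Ssum_def
    proof (rule sum.cong)
      fix \<sigma> assume "\<sigma> \<in> inv_avoid n k (Fpat k)"
      hence "fixpts (n+2) (ins2 n m \<sigma>) = fixpts n \<sigma>"
        by (intro fix_ins2 m2) (simp add: inv_avoid_def)
      thus "((\<lambda>\<pi>. p ^ fixpts (n+2) \<pi>) \<circ> ins2 n m) \<sigma> = p ^ fixpts n \<sigma>" by simp
    qed simp
    finally show "?g m = Ssum k n p" .
  qed simp
  also have "\<dots> = real (k-1) * Ssum k n p"
  proof -
    have "card {n+4-k..n+2} = k - 1" using nk k by simp
    thus ?thesis by simp
  qed
  finally show ?thesis .
qed

lemma Ssum_small: "n < k \<Longrightarrow> Ssum k n p = J n p"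
  unfolding Ssum_def inv_avoid_small using Tsum_J[of n p] by (simp add: Tsum_def)

lemma card_Ssum: "real (card (inv_avoid N k (Fpat k))) = Ssum k N 1"
  by (simp add: Ssum_def)



lemma Pnth:
  fixes a :: "nat \<Rightarrow> real"
  shows "fps_nth (\<Sum>j=0..K. fps_const (a j) * fps_X ^ j) n = (if n \<le> K then a n else 0)"
proof -
  have "fps_nth (\<Sum>j=0..K. fps_const (a j) * fps_X ^ j) n = (\<Sum>j=0..K. a j * (if n = j then 1 else 0))"
    by (simp add: fps_sum_nth)
  also have "\<dots> = (\<Sum>j\<in>{0..K}. if j = n then a j else 0)"
    by (rule sum.cong) auto
  also have "\<dots> = (if n \<le> K then a n else 0)"
    by (subst sum.delta) auto
  finally show ?thesis .
qed

lemma fps_part: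
  fixes k :: nat and p :: real
  assumes k: "k \<ge> 2"
  shows "Fgf k p =
           (\<Sum>j=0..k-2. fps_const (J j p) * fps_X ^ j)
           + fps_X ^ (k-1) / (1 - fps_const (real (k-1)) * fps_X ^ 2)
             * (fps_const (real (k-1) * J (k-2) p) * fps_X + fps_const (J (k-1) p))"
proof -
  define S where "S n = Ssum k n p" for n
  define c where "c = real (k-1)"
  define F where "F = Abs_fps S"
  define P :: "real fps" where "P = (\<Sum>j=0..k-2. fps_const (J j p) * fps_X ^ j)"
  define D :: "real fps" where "D = 1 - fps_const c * fps_X ^ 2"
  define Q :: "real fps" where "Q = fps_const (c * J (k-2) p) * fps_X + fps_const (J (k-1) p)"
  have FF: "Fgf k p = F" by (simp add: F_def Fgf_def S_def[abs_def] Ssum_def)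
  have rec: "S (n+2) = c * S n" if "k \<le> n+2" for n
    using Ssum_rec[OF k that] by (simp add: S_def c_def)
  have small: "S n = J n p" if "n < k" for n using Ssum_small[OF that] by (simp add: S_def)
  define b where "b n = (if n \<le> k-2 then 0 else S n)" for n
  have FP: "fps_nth (F - P) n = b n" for n
    using small[of n] k by (auto simp: F_def P_def Pnth b_def)
  have key: "(F - P) * D = fps_X ^ (k-1) * Q"
  proof (rule fps_ext)
    fix n
    have "(F - P) * D = (F - P) - fps_const c * (fps_X ^ 2 * (F - P))"
      by (simp add: D_def algebra_simps)
    hence "fps_nth ((F - P) * D) n = fps_nth (F - P) n - c * fps_nth (fps_X ^ 2 * (F - P)) n"
      by (simp only: fps_sub_nth fps_mult_left_const_nth)
    also have "fps_nth (fps_X ^ 2 * (F - P)) n = (if n < 2 then 0 else fps_nth (F - P) (n - 2))"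
      by (rule fps_X_power_mult_nth)
    finally have L: "fps_nth ((F - P) * D) n = b n - c * (if n < 2 then 0 else b (n-2))"
      by (simp only: FP)
    have Qn: "fps_nth Q j = (if j = 1 then c * J (k-2) p else 0) + (if j = 0 then J (k-1) p else 0)" for j
      by (simp add: Q_def fps_X_nth)
    have R: "fps_nth (fps_X ^ (k-1) * Q) n = (if n < k-1 then 0 else fps_nth Q (n - (k-1)))"
      by (rule fps_X_power_mult_nth)
    consider "n < k-1" | "n = k-1" | "n = k" | "n \<ge> k+1" by linarith
    thus "fps_nth ((F - P) * D) n = fps_nth (fps_X ^ (k-1) * Q) n"
    proof cases
      case 1
      hence "n \<le> k-2" "n-2 \<le> k-2" by arith+
      thus ?thesis using L R 1 by (simp add: b_def Qn)
    next
      case 2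
      have "b (k-1) = J (k-1) p" using small[of "k-1"] k by (simp add: b_def)
      moreover have "n - 2 \<le> k - 2" using 2 by arith
      hence "b (n-2) = 0" by (simp add: b_def)
      ultimately show ?thesis using L R 2 k by (simp add: Qn)
    next
      case 3
      have kk: "k - 2 + 2 = k" using k by simp
      have "S k = c * S (k-2)" using rec[of "k-2"] unfolding kk by simp
      hence "b k = c * J (k-2) p" using small[of "k-2"] k by (simp add: b_def)
      moreover have "b (n-2) = 0" using 3 by (simp add: b_def)
      ultimately show ?thesis using L R 3 k by (simp add: Qn)
    next
      case 4
      have nn: "n - 2 + 2 = n" using 4 k by simp
      have "S n = c * S (n-2)" using rec[of "n-2"] 4 unfolding nn by simp
      hence "b n = c * b (n-2)" using 4 k by (simp add: b_def)
      thus ?thesis using L R 4 k by (simp add: Qn)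
    qed
  qed
  have D0: "fps_nth D 0 \<noteq> 0" by (simp add: D_def)
  have "F = P + (F - P) * (D * inverse D)"
    using inverse_mult_eq_1'[OF D0] by simp
  also have "\<dots> = P + fps_X ^ (k-1) * Q * inverse D"
    by (simp add: key mult.assoc[symmetric])
  also have "\<dots> = P + fps_X ^ (k-1) / D * Q"
    by (simp add: fps_divide_unit[OF D0] algebra_simps)
  finally show ?thesis unfolding FF P_def D_def Q_def c_def .
qed


lemma count_even:
  assumes k: "k \<ge> 2"
  shows "card (inv_avoid (k+2*n) k (Fpat k)) = (k-1)^(n+1) * card (involutions (k-2))"
proof -
  have "Ssum k (k+2*n) 1 = real (k-1)^(n+1) * Ssum k (k-2) 1"
  proof (induction n)
    case 0
    have kk: "k - 2 + 2 = k" using k by simp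
    show ?case using Ssum_rec[OF k, of "k-2" 1] unfolding kk by simp
  next
    case (Suc n)
    have e: "k + 2 * Suc n = (k + 2*n) + 2" by simp
    show ?case unfolding e using Ssum_rec[OF k, of "k+2*n" 1] Suc by simp
  qed
  moreover have "inv_avoid (k-2) k (Fpat k) = involutions (k-2)" using k by (intro inv_avoid_small) simp
  ultimately have "real (card (inv_avoid (k+2*n) k (Fpat k))) = real ((k-1)^(n+1) * card (involutions (k-2)))"
    using card_Ssum[of "k+2*n" k] card_Ssum[of "k-2" k] by simp
  thus ?thesis by (simp only: of_nat_eq_iff)
qed

lemma count_odd:
  assumes k: "k \<ge> 2"
  shows "card (inv_avoid (k+2*n-1) k (Fpat k)) = (k-1)^n * card (involutions (k-1))"
proof -
  have "Ssum k (k-1+2*n) 1 = real (k-1)^n * Ssum k (k-1) 1"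
  proof (induction n)
    case 0 show ?case by simp
  next
    case (Suc n)
    have e: "k - 1 + 2 * Suc n = (k - 1 + 2*n) + 2" by simp
    have kn: "k \<le> k - 1 + 2*n + 2" by simp
    show ?case unfolding e using Ssum_rec[OF k kn, of 1] Suc by simp
  qed
  moreover have "inv_avoid (k-1) k (Fpat k) = involutions (k-1)" using k by (intro inv_avoid_small) simp
  moreover have "k + 2*n - 1 = k - 1 + 2*n" using k by simp
  ultimately have "real (card (inv_avoid (k+2*n-1) k (Fpat k))) = real ((k-1)^n * card (involutions (k-1)))"
    using card_Ssum[of "k-1+2*n" k] card_Ssum[of "k-1" k] by simp
  thus ?thesis by (simp only: of_nat_eq_iff)
qed

theorem theorem3p1:
  fixes k :: nat and p :: real
  assumes "k \<ge> 2"
  shows "(Fgf k p =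
           (\<Sum>j=0..k-2. fps_const (J j p) * fps_X ^ j)
           + fps_X ^ (k-1) / (1 - fps_const (real (k-1)) * fps_X ^ 2)
             * (fps_const (real (k-1) * J (k-2) p) * fps_X + fps_const (J (k-1) p))) \<and>
         (\<forall>n::nat. card (inv_avoid (k+2*n) k (Fpat k)) = (k-1)^(n+1) * card (involutions (k-2))) \<and>
         (\<forall>n::nat. card (inv_avoid (k+2*n-1) k (Fpat k)) = (k-1)^n * card (involutions (k-1)))"
  using fps_part[OF assms] count_even[OF assms] count_odd[OF assms] by blast

end
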